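(* Let $n\ge1$ and $0<\alpha<2$. For $0<h<1$ let $\mathcal{T}(h)=\sum_{\vec{k}\in\mathbb{Z}^n}h^n\delta_{h\vec{k}}$ and $\mathcal{S}(h)=\sum_{\vec{k}\neq\vec{j}}h^{2n}\frac{1}{|h\vec{k}-h\vec{j}|^{n+\alpha}}\delta_{(h\vec{k},h\vec{j})}$, the sum over $\vec{k},\vec{j}\in\mathbb{Z}^n$. Let $\Phi\in\mathscr{C}_c^\infty(\mathbb{R}^n\times\mathbb{R}^n)$ with $\Phi(x,x)=0$ for all $x$. For each $h$ let $\psi_h:h\mathbb{Z}^n\to\mathbb{R}$ satisfy $\int\varphi\psi_h\,d\mathcal{T}(h)=\iint\varphi(x)\Phi(x,y)\,d\mathcal{S}(h)(x,y)$ for all $\varphi\in\mathscr{C}_c(\mathbb{R}^n)$, and set $\mathcal{Q}(\Phi,h)=\sum_{\vec{k}}\psi_h(h\vec{k})\mathcal{X}_{Q(h\vec{k})}$ with $Q(h\vec{k})=\prod_{m=1}^n[hk_m,h(k_m+1))$. Then for every $\varphi\in\mathscr{C}_c(\mathbb{R}^n)$, $$\lim_{h\to0^+}\int_{\mathbb{R}^n}\mathcal{Q}(\Phi,h)\varphi\,dx=\int_{\mathbb{R}^n}\varphi(x)\,(-\Delta)_y^{\alpha/2}\Phi(x,x)\,dx,$$ that is, $\frac{d\mathcal{S}}{d\mathcal{T}}(\Phi)=(-\Delta)_y^{\alpha/2}\Phi(x,x)$.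
   Context: Here $(-\Delta)_y^{\alpha/2}\Phi(x,x)$ denotes $\lim_{\varepsilon\to0^+}\int_{\{y:|x-y|>\varepsilon\}}\frac{\Phi(x,y)-\Phi(x,x)}{|x-y|^{n+\alpha}}\,dy$ (the paper's convention, without normalizing constant). $\delta_p$ is the unit point mass at $p$. $\frac{d\mathcal{S}}{d\mathcal{T}}(\Phi)$ is the limit as $h\to0^+$, tested against $\varphi\in\mathscr{C}_c(\mathbb{R}^n)$ with Lebesgue measure, of the piecewise-constant quotients $\mathcal{Q}(\Phi,h)$ defined from the Kirchhoff divergence $\psi_h$. *)

theory Defs
  imports "HOL-Analysis.Analysis"
begin

text \<open>C-infinity: there is a family of functions containing f, closed under
  taking directional (Frechet) derivatives, all of whose members are
  differentiable everywhere.  Equivalently: all iterated derivatives exist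
  (and are hence continuous).\<close>
definition smooth_fun :: "('a::euclidean_space \<Rightarrow> real) \<Rightarrow> bool" where
  "smooth_fun f \<longleftrightarrow> (\<exists>F. f \<in> F \<and>
     (\<forall>g\<in>F. (\<forall>x. g differentiable (at x)) \<and>
              (\<forall>v. (\<lambda>x. frechet_derivative g (at x) v) \<in> F)))"

definition compact_support :: "('a::real_normed_vector \<Rightarrow> real) \<Rightarrow> bool" where
  "compact_support f \<longleftrightarrow> compact (closure {x. f x \<noteq> 0})"

definition Cc :: "('a::euclidean_space \<Rightarrow> real) set" where
  "Cc = {f. continuous_on UNIV f \<and> compact_support f}"

definition Cc_inf :: "('a::euclidean_space \<Rightarrow> real) set" where
  "Cc_inf = {f. smooth_fun f \<and> compact_support f}"

definition latt :: "real \<Rightarrow> int^'n \<Rightarrow> real^'n" where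
  "latt h k = (\<chi> i. h * of_int (k $ i))"

definition cube :: "real \<Rightarrow> int^'n \<Rightarrow> (real^'n) set" where
  "cube h k = {x. \<forall>i. h * of_int (k $ i) \<le> x $ i \<and> x $ i < h * (of_int (k $ i) + 1)}"

text \<open>piecewise-constant quotient Q(Phi,h) = sum_k psi_h(h k) * indicator of Q(h k),
  where psi h k stands for psi_h(h k)\<close>
definition Qpc :: "(int^'n \<Rightarrow> real) \<Rightarrow> real \<Rightarrow> real^'n \<Rightarrow> real" where
  "Qpc psi h x = (\<Sum>\<^sub>\<infinity>k. psi k * indicator (cube h k) x)"

text \<open>fractional Laplacian in y evaluated on the diagonal (no normalizing constant),
  as a principal value\<close>
definition frac_lap_diag :: "real \<Rightarrow> ((real^'n) \<times> (real^'n) \<Rightarrow> real) \<Rightarrow> real^'n \<Rightarrow> real" where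
  "frac_lap_diag \<alpha> \<Phi> x = Lim (at_right 0)
     (\<lambda>\<epsilon>. LINT y:{y. dist x y > \<epsilon>}|lborel.
        (\<Phi> (x, y) - \<Phi> (x, x)) / norm (x - y) powr (real CARD('n) + \<alpha>))"

end

theory Submission imports Defs begin

definition fl :: "real \<Rightarrow> real^'n \<Rightarrow> int^'n" where
  "fl h x = (\<chi> i. \<lfloor>x $ i / h\<rfloor>)"

lemma cube_iff: "0 < h \<Longrightarrow> x \<in> cube h k \<longleftrightarrow> fl h x = k"
proof -
  assume h: "0 < h"
  have "x \<in> cube h k \<longleftrightarrow> (\<forall>i. \<lfloor>x $ i / h\<rfloor> = k $ i)"
    unfolding cube_def using h
    by (simp add: floor_eq_iff pos_le_divide_eq pos_divide_less_eq mult.commute)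
  also have "\<dots> \<longleftrightarrow> fl h x = k" by (simp add: fl_def vec_eq_iff)
  finally show ?thesis .
qed

lemma Qpc_eq: "0 < h \<Longrightarrow> Qpc g h x = g (fl h x)"
proof -
  assume h: "0 < h"
  have "Qpc g h x = (\<Sum>\<^sub>\<infinity>k\<in>{fl h x}. g k * indicator (cube h k) x)"
    unfolding Qpc_def
    by (rule infsum_cong_neutral) (auto simp: cube_iff[OF h] indicator_def)
  also have "\<dots> = g (fl h x)" using h by (simp add: cube_iff indicator_def)
  finally show ?thesis .
qed

lemma finite_intbox: "finite {m::int^'n. \<forall>i. \<bar>m $ i\<bar> \<le> N}"
proof -
  have "{m::int^'n. \<forall>i. \<bar>m $ i\<bar> \<le> N} \<subseteq> vec_lambda ` (PiE UNIV (\<lambda>_. {-N..N}))"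
  proof
    fix m :: "int^'n" assume "m \<in> {m. \<forall>i. \<bar>m $ i\<bar> \<le> N}"
    then have "(\<lambda>i. m $ i) \<in> PiE UNIV (\<lambda>_. {-N..N})" by (auto simp: abs_le_iff minus_le_iff)
    then show "m \<in> vec_lambda ` (PiE UNIV (\<lambda>_. {-N..N}))"
      by (metis image_eqI vec_lambda_eta)
  qed
  moreover have "finite (vec_lambda ` (PiE UNIV (\<lambda>_::'n. {-N..N})))"
    by (intro finite_imageI finite_PiE) auto
  ultimately show ?thesis by (rule finite_subset)
qed

lemma latt_add: "latt h (a + b) = latt h a + latt h b"
  by (simp add: latt_def vec_eq_iff algebra_simps)
lemma latt_minus: "latt h (- a) = - latt h a"
  by (simp add: latt_def vec_eq_iff)
lemma latt_zero: "latt h 0 = 0"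
  by (simp add: latt_def vec_eq_iff)

lemma latt_norm_ge: assumes "m \<noteq> 0" "0 < h" shows "h \<le> norm (latt h m)"
proof -
  obtain i where i: "m $ i \<noteq> 0" using assms(1) by (auto simp: vec_eq_iff)
  then have "1 \<le> \<bar>real_of_int (m $ i)\<bar>" by linarith
  then have "h \<le> \<bar>h * real_of_int (m $ i)\<bar>" using assms(2)
    by (simp add: abs_mult)
  also have "\<dots> = \<bar>latt h m $ i\<bar>" by (simp add: latt_def)
  also have "\<dots> \<le> norm (latt h m)" by (rule component_le_norm_cart)
  finally show ?thesis .
qed

lemma latt_norm_le_box: assumes "norm (latt h m) \<le> R" "0 < h"
  shows "\<bar>m $ i\<bar> \<le> \<lceil>R / h\<rceil>"
proof -
  have "\<bar>h * real_of_int (m $ i)\<bar> \<le> R"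
    using component_le_norm_cart[of "latt h m" i] assms(1) by (simp add: latt_def)
  then have "\<bar>real_of_int (m $ i)\<bar> \<le> R / h" using assms(2)
    by (simp add: abs_mult pos_le_divide_eq mult.commute)
  then show ?thesis by linarith
qed

lemma round_close: fixes x :: "real^'n" assumes "0 < h" shows "norm (latt h (fl h x) - x) \<le> real CARD('n) * h"
proof -
  have "norm (latt h (fl h x) - x) \<le> (\<Sum>i\<in>UNIV. \<bar>(latt h (fl h x) - x) $ i\<bar>)"
    by (rule norm_le_l1_cart)
  also have "\<dots> \<le> (\<Sum>i\<in>(UNIV::'n set). h)"
  proof (rule sum_mono)
    fix i :: 'n
    have a: "real_of_int \<lfloor>x $ i / h\<rfloor> \<le> x $ i / h" "x $ i / h < real_of_int \<lfloor>x $ i / h\<rfloor> + 1"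
      by linarith+
    have "h * real_of_int \<lfloor>x $ i / h\<rfloor> \<le> x $ i"
      using mult_left_mono[OF a(1), of h] assms by simp
    moreover have "x $ i < h * real_of_int \<lfloor>x $ i / h\<rfloor> + h"
      using mult_strict_left_mono[OF a(2) assms] assms by (simp add: algebra_simps)
    ultimately show "\<bar>(latt h (fl h x) - x) $ i\<bar> \<le> h"
      by (simp add: latt_def fl_def)
  qed
  also have "\<dots> = real CARD('n) * h" by simp
  finally show ?thesis .
qed

lemma countable_intvec: "countable (UNIV :: (int^'n) set)"
proof -
  have "countable (UNIV :: ('n \<Rightarrow> int) set)" by simp
  then have "countable (vec_lambda ` (UNIV :: ('n \<Rightarrow> int) set))" by simp
  moreover have "vec_lambda ` (UNIV :: ('n \<Rightarrow> int) set) = UNIV"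
    by (metis surj_def vec_lambda_eta)
  ultimately show ?thesis by simp
qed

lemma cube_borel: fixes k :: "int^'n" shows "cube h k \<in> sets borel"
proof -
  have "cube h k = (\<Inter>i. {x. h * of_int (k $ i) \<le> x $ i} \<inter> {x. x $ i < h * (of_int (k $ i) + 1)})"
    by (auto simp: cube_def)
  also have "\<dots> \<in> sets borel"
  proof (rule sets.countable_INT')
    show "countable (UNIV :: 'n set)" by (simp add: countable_finite)
    show "UNIV \<noteq> {}" by simp
    show "range (\<lambda>i. {x::real^'n. h * of_int (k $ i) \<le> x $ i} \<inter> {x. x $ i < h * (of_int (k $ i) + 1)}) \<subseteq> sets borel"
    proof safe
      fix i :: 'n
      have c: "closed {x::real^'n. h * of_int (k $ i) \<le> x $ i}"
        by (intro closed_Collect_le continuous_intros)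
      have o: "open {x::real^'n. x $ i < h * (of_int (k $ i) + 1)}"
        by (intro open_Collect_less continuous_intros)
      show "{x::real^'n. h * of_int (k $ i) \<le> x $ i} \<inter> {x. x $ i < h * (of_int (k $ i) + 1)} \<in> sets borel"
        using c o by (intro sets.Int borel_closed borel_open)
    qed
  qed
  finally show ?thesis .
qed

lemma fl_measurable: assumes "0 < h" shows "fl h \<in> borel \<rightarrow>\<^sub>M count_space (UNIV :: (int^'n) set)"
proof (subst measurable_count_space_eq_countable[OF countable_intvec], safe)
  fix k :: "int^'n"
  have "fl h -` {k} \<inter> space borel = cube h k" using cube_iff[OF assms] by auto
  then show "fl h -` {k} \<inter> space borel \<in> sets borel" using cube_borel by simp
qed auto

lemma step_measurable: assumes "0 < h"
  shows "(\<lambda>x. g (fl h x :: int^'n) :: real) \<in> borel_measurable lborel"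
proof -
  have "(\<lambda>x. g (fl h x)) \<in> borel_measurable borel"
    by (rule measurable_compose[OF fl_measurable[OF assms]]) simp
  then show ?thesis by simp
qed

lemma cube_emeasure: fixes k :: "int^'n" assumes h: "0 < h"
  shows "emeasure lborel (cube h k) = ennreal (h ^ CARD('n))"
proof -
  define a where "a = latt h k"
  define b where "b = a + (\<chi> i. h :: real^'n)"
  have Bas: "\<And>x. x \<in> (Basis :: (real^'n) set) \<Longrightarrow> (b - a) \<bullet> x = h"
    by (auto simp: b_def Basis_vec_def inner_axis)
  have le: "\<And>x. x \<in> (Basis :: (real^'n) set) \<Longrightarrow> a \<bullet> x \<le> b \<bullet> x"
    using Bas h by (metis inner_diff_left diff_ge_0_iff_ge less_imp_le)
  have pr: "prod ((\<bullet>) (b - a)) Basis = h ^ CARD('n)"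
    using Bas by (simp add: prod.cong[OF refl Bas] DIM_cart)
  have sub1: "box a b \<subseteq> cube h k"
    by (auto simp: mem_box_cart cube_def a_def b_def latt_def algebra_simps less_imp_le)
  have sub2: "cube h k \<subseteq> cbox a b"
    by (auto simp: mem_box_cart cube_def a_def b_def latt_def algebra_simps less_imp_le)
  have "emeasure lborel (box a b) \<le> emeasure lborel (cube h k)"
    by (rule emeasure_mono[OF sub1]) (simp add: cube_borel)
  moreover have "emeasure lborel (cube h k) \<le> emeasure lborel (cbox a b)"
    by (rule emeasure_mono[OF sub2]) simp
  ultimately show ?thesis
    using emeasure_lborel_box[OF le] emeasure_lborel_cbox[OF le] pr by simp
qed

lemma cube_measure: fixes k :: "int^'n" assumes h: "0 < h"
  shows "measure lborel (cube h k) = h ^ CARD('n)"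
  using cube_emeasure[OF h, of k] h by (simp add: measure_def)

lemma step_integral:
  fixes g :: "int^'n \<Rightarrow> real"
  assumes h: "0 < h" and S: "finite S" and supp: "\<And>m. m \<notin> S \<Longrightarrow> g m = 0"
  shows "integrable lborel (\<lambda>x. g (fl h x))"
    and "(LINT x|lborel. g (fl h x)) = h ^ CARD('n) * (\<Sum>m\<in>S. g m)"
proof -
  have eq: "(\<lambda>x. g (fl h x)) = (\<lambda>x. \<Sum>m\<in>S. g m * indicator (cube h m) x)"
  proof
    fix x :: "real^'n"
    show "g (fl h x) = (\<Sum>m\<in>S. g m * indicator (cube h m) x)"
    proof (cases "fl h x \<in> S")
      case True
      have "(\<Sum>m\<in>S. g m * indicator (cube h m) x) = (\<Sum>m\<in>S. if m = fl h x then g m else 0)"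
        by (rule sum.cong) (auto simp: indicator_def cube_iff[OF h])
      then show ?thesis using True S by simp
    next
      case False
      have "(\<Sum>m\<in>S. g m * indicator (cube h m) x) = (\<Sum>m\<in>S. 0)"
        by (rule sum.cong) (use False in \<open>auto simp: indicator_def cube_iff[OF h]\<close>)
      then show ?thesis using False supp by simp
    qed
  qed
  have int: "\<And>m. integrable lborel (indicat_real (cube h m))"
    by (rule integrable_real_indicator) (auto simp: cube_borel cube_emeasure[OF h])
  show "integrable lborel (\<lambda>x. g (fl h x))"
    unfolding eq using int by (intro Bochner_Integration.integrable_sum integrable_mult_right) auto
  have "(LINT x|lborel. g (fl h x)) = (\<Sum>m\<in>S. g m * measure lborel (cube h m))"
    unfolding eq
    by (subst Bochner_Integration.integral_sum) (use int in \<open>auto intro: integrable_mult_right\<close>)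
  also have "\<dots> = h ^ CARD('n) * (\<Sum>m\<in>S. g m)"
    by (simp add: cube_measure[OF h] sum_distrib_right mult.commute)
  finally show "(LINT x|lborel. g (fl h x)) = h ^ CARD('n) * (\<Sum>m\<in>S. g m)" .
qed

abbreviation fd :: "('a::real_normed_vector \<Rightarrow> real) \<Rightarrow> 'a \<Rightarrow> 'a \<Rightarrow> real" where
  "fd g p \<equiv> frechet_derivative g (at p)"

lemma lin_expand:
  fixes L :: "'a::euclidean_space \<Rightarrow> real"
  assumes "linear L" shows "L y = (\<Sum>c\<in>Basis. (y \<bullet> c) * L c)"
proof -
  have "L y = L (\<Sum>c\<in>Basis. (y \<bullet> c) *\<^sub>R c)" by (simp add: euclidean_representation)
  also have "\<dots> = (\<Sum>c\<in>Basis. L ((y \<bullet> c) *\<^sub>R c))" by (rule linear_sum[OF assms])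
  also have "\<dots> = (\<Sum>c\<in>Basis. (y \<bullet> c) * L c)" by (simp add: linear_cmul[OF assms])
  finally show ?thesis .
qed

lemma lin_bound:
  fixes L :: "'a::euclidean_space \<Rightarrow> real"
  assumes "linear L" "\<And>c. c \<in> Basis \<Longrightarrow> \<bar>L c\<bar> \<le> B c"
  shows "\<bar>L y\<bar> \<le> (\<Sum>c\<in>Basis. B c) * norm y"
proof -
  have "\<bar>L y\<bar> = \<bar>\<Sum>c\<in>Basis. (y \<bullet> c) * L c\<bar>" by (subst lin_expand[OF assms(1)]) (rule refl)
  also have "\<dots> \<le> (\<Sum>c\<in>Basis. \<bar>(y \<bullet> c) * L c\<bar>)" by (rule sum_abs)
  also have "\<dots> \<le> (\<Sum>c\<in>Basis. norm y * B c)"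
  proof (rule sum_mono)
    fix c :: 'a assume c: "c \<in> Basis"
    have "\<bar>(y \<bullet> c) * L c\<bar> = \<bar>y \<bullet> c\<bar> * \<bar>L c\<bar>" by (simp add: abs_mult)
    also have "\<dots> \<le> norm y * B c"
      by (rule mult_mono) (use Basis_le_norm[OF c, of y] assms(2)[OF c] in auto)
    finally show "\<bar>(y \<bullet> c) * L c\<bar> \<le> norm y * B c" .
  qed
  also have "\<dots> = (\<Sum>c\<in>Basis. B c) * norm y" by (simp add: sum_distrib_left mult.commute)
  finally show ?thesis .
qed

lemma deriv_supp:
  fixes g :: "'a::euclidean_space \<Rightarrow> real"
  assumes d: "\<And>x. g differentiable (at x)" and ne: "fd g p v \<noteq> 0"
  shows "p \<in> closure {x. g x \<noteq> 0}"
proof (rule ccontr)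
  assume np: "p \<notin> closure {x. g x \<noteq> 0}"
  define U where "U = - closure {x. g x \<noteq> 0}"
  have U: "open U" "p \<in> U" using np by (auto simp: U_def)
  have z: "\<And>x. x \<in> U \<Longrightarrow> g x = 0" using closure_subset by (force simp: U_def)
  have "(g has_derivative fd g p) (at p)" using d frechet_derivative_works by blast
  then have "((\<lambda>_. 0) has_derivative fd g p) (at p)"
    by (rule has_derivative_transform_within_open[OF _ U]) (simp add: z)
  moreover have "((\<lambda>_. 0::real) has_derivative (\<lambda>_. 0)) (at p)" by simp
  ultimately have "fd g p = (\<lambda>_. 0)" by (rule has_derivative_unique)
  then show False using ne by simp
qed

lemma cont_supp_bounded:
  fixes g :: "'a::euclidean_space \<Rightarrow> real"
  assumes c: "continuous_on UNIV g" and K: "compact K" and s: "\<And>x. g x \<noteq> 0 \<Longrightarrow> x \<in> K"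
  shows "\<exists>B\<ge>0. \<forall>x. \<bar>g x\<bar> \<le> B"
proof -
  have "compact (g ` K)" by (rule compact_continuous_image[OF continuous_on_subset[OF c] K]) simp
  then have "bounded (g ` K)" by (rule compact_imp_bounded)
  then obtain B where B: "\<And>y. y \<in> g ` K \<Longrightarrow> norm y \<le> B" unfolding bounded_iff by blast
  have "\<forall>x. \<bar>g x\<bar> \<le> max B 0"
  proof
    fix x show "\<bar>g x\<bar> \<le> max B 0"
      using B[of "g x"] s[of x] by (cases "g x = 0") auto
  qed
  then show ?thesis by (intro exI[of _ "max B 0"]) auto
qed


lemma smooth_lip:
  fixes f :: "'a::euclidean_space \<Rightarrow> real"
  assumes sm: "smooth_fun f" and cs: "compact_support f"
  shows "\<exists>L. \<forall>p q v. \<bar>fd f p v - fd f q v\<bar> \<le> L * norm v * norm (p - q)"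
proof -
  obtain F where F: "f \<in> F" "\<And>g x. g \<in> F \<Longrightarrow> g differentiable (at x)"
    "\<And>g v. g \<in> F \<Longrightarrow> (\<lambda>x. fd g x v) \<in> F"
    using sm unfolding smooth_fun_def by blast
  define K where "K = closure {x. f x \<noteq> 0}"
  have K: "compact K" "closed K" using cs by (auto simp: K_def compact_support_def)
  have fK: "\<And>x. f x \<noteq> 0 \<Longrightarrow> x \<in> K" unfolding K_def by (rule subsetD[OF closure_subset]) simp
  have supp_step: "\<And>g v x. g \<in> F \<Longrightarrow> (\<And>x. g x \<noteq> 0 \<Longrightarrow> x \<in> K) \<Longrightarrow> fd g x v \<noteq> 0 \<Longrightarrow> x \<in> K"
  proof -
    fix g v x assume g: "g \<in> F" and gs: "\<And>x. g x \<noteq> 0 \<Longrightarrow> x \<in> K" and ne: "fd g x v \<noteq> 0"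
    have "x \<in> closure {x. g x \<noteq> 0}" by (rule deriv_supp[OF F(2)[OF g] ne])
    also have "\<dots> \<subseteq> K" using closure_minimal[of "{x. g x \<noteq> 0}" K] gs K(2) by blast
    finally show "x \<in> K" .
  qed
  define u where "u b = (\<lambda>p. fd f p b)" for b
  have uF: "\<And>b. u b \<in> F" using F by (simp add: u_def)
  have uK: "\<And>b x. u b x \<noteq> 0 \<Longrightarrow> x \<in> K" using supp_step[OF F(1) fK] by (simp add: u_def)
  have wb: "\<exists>B\<ge>0. \<forall>x. \<bar>fd (u b) x c\<bar> \<le> B" for b c
  proof (rule cont_supp_bounded[OF _ K(1)])
    have "(\<lambda>x. fd (u b) x c) \<in> F" using F(3)[OF uF] .
    then have "\<And>x. (\<lambda>x. fd (u b) x c) differentiable (at x)" using F(2) by blast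
    then show "continuous_on UNIV (\<lambda>x. fd (u b) x c)"
      by (simp add: differentiable_imp_continuous_within continuous_at_imp_continuous_on)
    show "\<And>x. fd (u b) x c \<noteq> 0 \<Longrightarrow> x \<in> K" using supp_step[OF uF[of b] uK[of b]] by blast
  qed
  then obtain B where B: "\<And>b c x. \<bar>fd (u b) x c\<bar> \<le> B b c" by metis
  define Bb where "Bb b = (\<Sum>c\<in>Basis. B b c)" for b
  have ulip: "\<bar>u b p - u b q\<bar> \<le> Bb b * norm (p - q)" for b p q
  proof -
    have "norm (u b p - u b q) \<le> Bb b * norm (p - q)"
    proof (rule differentiable_bound[OF convex_UNIV])
      fix x :: 'a
      have "(u b has_derivative fd (u b) x) (at x)" using F(2)[OF uF] frechet_derivative_works by blast
      then show "(u b has_derivative fd (u b) x) (at x within UNIV)" by simp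
      have lin: "linear (fd (u b) x)"
        using F(2)[OF uF] frechet_derivative_works has_derivative_linear by blast
      show "onorm (fd (u b) x) \<le> Bb b"
        by (rule onorm_le) (use lin_bound[OF lin B] in \<open>simp add: Bb_def\<close>)
    qed simp_all
    then show ?thesis by simp
  qed
  have "\<forall>p q v. \<bar>fd f p v - fd f q v\<bar> \<le> (\<Sum>b\<in>Basis. Bb b) * norm v * norm (p - q)"
  proof (intro allI)
    fix p q v :: 'a
    have linp: "linear (fd f p)" and linq: "linear (fd f q)"
      using F(2)[OF F(1)] frechet_derivative_works has_derivative_linear by blast+
    have "fd f p v - fd f q v = (\<Sum>b\<in>Basis. (v \<bullet> b) * (u b p - u b q))"
      unfolding lin_expand[OF linp, of v] lin_expand[OF linq, of v] u_def
      by (simp add: sum_subtractf[symmetric] algebra_simps)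
    also have "\<bar>\<dots>\<bar> \<le> (\<Sum>b\<in>Basis. \<bar>(v \<bullet> b) * (u b p - u b q)\<bar>)" by (rule sum_abs)
    also have "\<dots> \<le> (\<Sum>b\<in>Basis. norm v * (Bb b * norm (p - q)))"
    proof (rule sum_mono)
      fix b :: 'a assume b: "b \<in> Basis"
      show "\<bar>(v \<bullet> b) * (u b p - u b q)\<bar> \<le> norm v * (Bb b * norm (p - q))"
        unfolding abs_mult
        by (rule mult_mono) (use Basis_le_norm[OF b, of v] ulip[of b p q] in auto)
    qed
    also have "\<dots> = (\<Sum>b\<in>Basis. Bb b) * norm v * norm (p - q)"
      by (simp add: sum_distrib_left sum_distrib_right mult.commute mult.left_commute)
    finally show "\<bar>fd f p v - fd f q v\<bar> \<le> (\<Sum>b\<in>Basis. Bb b) * norm v * norm (p - q)" .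
  qed
  then show ?thesis by blast
qed

lemma smooth_diff: "smooth_fun f \<Longrightarrow> f differentiable (at x)"
  unfolding smooth_fun_def by blast

lemma smooth_hasd: "smooth_fun f \<Longrightarrow> (f has_derivative fd f x) (at x)"
  using smooth_diff frechet_derivative_works by blast

lemma smooth_lin: "smooth_fun f \<Longrightarrow> linear (fd f x)"
  using smooth_hasd has_derivative_linear by blast

lemma smooth_cont: "smooth_fun f \<Longrightarrow> continuous_on UNIV f"
  by (simp add: smooth_diff differentiable_imp_continuous_within continuous_at_imp_continuous_on)

lemma H_bound_gen:
  fixes \<Phi> :: "('a::euclidean_space \<times> 'a) \<Rightarrow> real"
  assumes sm: "smooth_fun \<Phi>" and cs: "compact_support \<Phi>"
  shows "\<exists>C. \<forall>a b. \<bar>\<Phi> (a, a + b) + \<Phi> (a, a - b) - 2 * \<Phi> (a, a)\<bar> \<le> C * (norm b)\<^sup>2"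
proof -
  obtain L0 where L0: "\<And>p q v. \<bar>fd \<Phi> p v - fd \<Phi> q v\<bar> \<le> L0 * norm v * norm (p - q)"
    using smooth_lip[OF sm cs] by blast
  define L where "L = max L0 0"
  have L: "\<bar>fd \<Phi> p v - fd \<Phi> q v\<bar> \<le> L * norm v * norm (p - q)" for p q v
  proof -
    have "L0 * norm v * norm (p - q) \<le> L * norm v * norm (p - q)"
      unfolding L_def by (intro mult_right_mono) auto
    then show ?thesis using L0[of p v q] by linarith
  qed
  have L_nn: "L \<ge> 0" by (simp add: L_def)
  have "\<bar>\<Phi> (a, a + b) + \<Phi> (a, a - b) - 2 * \<Phi> (a, a)\<bar> \<le> (2 * L) * (norm b)\<^sup>2" for a b
  proof -
    define g1 where "g1 t = (a, a) + t *\<^sub>R (0, b)" for t :: real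
    define g2 where "g2 t = (a, a) + t *\<^sub>R (0, -b)" for t :: real
    define f where "f t = \<Phi> (g1 t) + \<Phi> (g2 t)" for t
    define f' where "f' t = (\<lambda>s. fd \<Phi> (g1 t) (s *\<^sub>R (0, b)) + fd \<Phi> (g2 t) (s *\<^sub>R (0, -b)))" for t
    have dg1: "(g1 has_derivative (\<lambda>s. s *\<^sub>R (0, b))) (at t)" for t
      unfolding g1_def by (auto intro!: derivative_eq_intros)
    have dg2: "(g2 has_derivative (\<lambda>s. s *\<^sub>R (0, -b))) (at t)" for t
      unfolding g2_def by (auto intro!: derivative_eq_intros)
    have df: "(f has_derivative f' t) (at t)" for t
    proof -
      have "((\<lambda>t. \<Phi> (g1 t)) has_derivative (\<lambda>s. fd \<Phi> (g1 t) (s *\<^sub>R (0, b)))) (at t)"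
        using diff_chain_at[OF dg1 smooth_hasd[OF sm]] by (simp add: o_def)
      moreover have "((\<lambda>t. \<Phi> (g2 t)) has_derivative (\<lambda>s. fd \<Phi> (g2 t) (s *\<^sub>R (0, -b)))) (at t)"
        using diff_chain_at[OF dg2 smooth_hasd[OF sm]] by (simp add: o_def)
      ultimately show ?thesis unfolding f_def f'_def by (rule has_derivative_add)
    qed
    have on: "onorm (f' t) \<le> 2 * L * (norm b)\<^sup>2" if t: "t \<in> {0..1}" for t
    proof (rule onorm_le)
      fix s :: real
      have lin1: "linear (fd \<Phi> (g1 t))" and lin2: "linear (fd \<Phi> (g2 t))"
        using smooth_lin[OF sm] by blast+
      have "(0::'a, -b) = - (0, b)" by simp
      have e1: "fd \<Phi> (g1 t) (s *\<^sub>R (0, b)) = s * fd \<Phi> (g1 t) (0, b)"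
        using linear_cmul[OF lin1, of s "(0, b)"] by simp
      have e2: "fd \<Phi> (g2 t) (s *\<^sub>R (0, -b)) = - (s * fd \<Phi> (g2 t) (0, b))"
        using linear_cmul[OF lin2, of s "(0, -b)"] linear_neg[OF lin2, of "(0, b)"] by simp
      have "f' t s = s * (fd \<Phi> (g1 t) (0, b) - fd \<Phi> (g2 t) (0, b))"
        unfolding f'_def e1 e2 by (simp add: algebra_simps)
      also have "norm \<dots> = \<bar>s\<bar> * \<bar>fd \<Phi> (g1 t) (0, b) - fd \<Phi> (g2 t) (0, b)\<bar>" by (simp add: abs_mult)
      also have "\<dots> \<le> \<bar>s\<bar> * (L * norm (0::'a, b) * norm (g1 t - g2 t))"
        by (rule mult_left_mono[OF L]) simp
      also have "norm (g1 t - g2 t) = 2 * t * norm b"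
      proof -
        have "g1 t - g2 t = (0, (2 * t) *\<^sub>R b)" by (simp add: g1_def g2_def scaleR_add_left[symmetric])
        then show ?thesis using t by (simp add: norm_Pair)
      qed
      also have "norm (0::'a, b) = norm b" by (simp add: norm_Pair)
      also have "\<bar>s\<bar> * (L * norm b * (2 * t * norm b)) \<le> 2 * L * (norm b)\<^sup>2 * norm s"
      proof -
        have "L * norm b * (2 * t * norm b) = t * (2 * L * (norm b)\<^sup>2)" by (simp add: power2_eq_square algebra_simps)
        also have "\<dots> \<le> 2 * L * (norm b)\<^sup>2"
          using t L_nn by (simp add: mult_left_le_one_le)
        finally show ?thesis by (simp add: mult.commute mult_left_mono)
      qed
      finally show "norm (f' t s) \<le> 2 * L * (norm b)\<^sup>2 * norm s" .
    qed
    have "norm (f 1 - f 0) \<le> 2 * L * (norm b)\<^sup>2 * norm (1 - (0::real))"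
      by (rule differentiable_bound[of "{0..1}"]) (use df on in \<open>auto intro: has_derivative_at_withinI\<close>)
    moreover have "f 1 = \<Phi> (a, a + b) + \<Phi> (a, a - b)" by (simp add: f_def g1_def g2_def)
    moreover have "f 0 = 2 * \<Phi> (a, a)" by (simp add: f_def g1_def g2_def)
    ultimately show ?thesis by simp
  qed
  then show ?thesis by blast
qed

section \<open>Singular integrability\<close>

lemma dyadic_exists:
  fixes R t :: real
  assumes R: "0 < R" and z: "0 < t" "t \<le> R"
  shows "\<exists>j. R * (1/2) ^ Suc j < t \<and> t \<le> R * (1/2) ^ j"
proof -
  obtain m where m: "R / t < 2 ^ m" using real_arch_pow[of 2 "R / t"] by auto
  have P: "R * (1/2) ^ Suc m < t"
  proof -
    have "R < t * 2 ^ m" using m z by (simp add: divide_less_eq mult.commute)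
    then have "R * (1/2)^m < t" by (simp add: power_one_over field_simps)
    moreover have "R * (1/2) ^ Suc m \<le> R * (1/2)^m" using R by (simp add: power_one_over field_simps)
    ultimately show ?thesis by linarith
  qed
  obtain k where k: "R * (1/2) ^ Suc k < t" "\<And>i. i < k \<Longrightarrow> \<not> R * (1/2) ^ Suc i < t"
    using ex_least_nat_le[of "\<lambda>j. R * (1/2) ^ Suc j < t", OF P] by blast
  show ?thesis
  proof (cases k)
    case 0 then show ?thesis using k z by (intro exI[of _ k]) simp
  next
    case (Suc i) then show ?thesis using k(1) k(2)[of i] by (intro exI[of _ k]) simp
  qed
qed

lemma sing_int:
  fixes q R :: real
  assumes q: "- real DIM('a) < q" and R: "0 < R"
  shows "integrable lborel (\<lambda>z::'a::euclidean_space. indicator (cball 0 R) z * norm z powr q)"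
proof (cases "0 \<le> q")
  case True
  show ?thesis
  proof (rule Bochner_Integration.integrable_bound)
    show "integrable lborel (\<lambda>z::'a. indicator (cball 0 R) z * R powr q)"
      using emeasure_lborel_cball_finite[of "0::'a" R]
      by (intro integrable_mult_left integrable_real_indicator) (auto simp: top_unique infinity_ennreal_def)
    show "(\<lambda>z::'a. indicator (cball 0 R) z * norm z powr q) \<in> borel_measurable lborel"
      by (intro borel_measurable_times borel_measurable_indicator powr_real_measurable) auto
    show "AE z in lborel. norm (indicator (cball 0 R) z * norm z powr q) \<le> norm (indicator (cball 0 R) z * R powr q)"
      using True R by (auto simp: indicator_def intro!: powr_mono2)
  qed
next
  case False
  let ?n = "DIM('a)"
  define V where "V = unit_ball_vol (real ?n)"
  have V: "0 \<le> V" by (simp add: V_def unit_ball_vol_nonneg)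
  define r where "r j = R * (1/2) ^ j" for j :: nat
  have r_pos: "0 < r j" for j using R by (simp add: r_def)
  define A where "A j = cball (0::'a) (r j) - cball 0 (r (Suc j))" for j
  have A_sets: "A j \<in> sets lborel" for j by (simp add: A_def)
  define x where "x = (1/2::real) powr (q + real ?n)"
  have x: "0 \<le> x" "x < 1" using q by (auto simp: x_def powr01_less_one)
  define c where "c = R powr q * V * R ^ ?n * (1/2) powr q"
  have c: "0 \<le> c" using V R by (simp add: c_def)
  have g_eq: "r (Suc j) powr q * V * r j ^ ?n = c * x ^ j" for j
  proof -
    have h2: "((1/2::real) ^ m) = (1/2) powr (real m)" for m by (simp add: powr_realpow)
    have "r (Suc j) powr q = (R * (1/2) powr real (Suc j)) powr q"
      by (simp only: r_def h2)
    also have "\<dots> = R powr q * ((1/2) powr real (Suc j)) powr q"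
      using R by (intro powr_mult)
    also have "\<dots> = R powr q * (1/2) powr (real (Suc j) * q)" by (simp only: powr_powr)
    finally have E1: "r (Suc j) powr q = R powr q * (1/2) powr (real (Suc j) * q)" .
    have E2: "r j ^ ?n = R ^ ?n * (1/2) powr (real j * real ?n)"
    proof -
      have "r j ^ ?n = R ^ ?n * (1/2) ^ (j * ?n)" by (simp add: r_def power_mult_distrib power_mult)
      also have "(1/2::real) ^ (j * ?n) = (1/2) powr (real j * real ?n)"
        by (simp only: h2 of_nat_mult)
      finally show ?thesis .
    qed
    have E3: "x ^ j = (1/2) powr (real j * (q + real ?n))"
    proof -
      have "x ^ j = x powr real j" by (rule powr_realpow[symmetric]) (simp add: x_def)
      also have "\<dots> = (1/2) powr (real j * (q + real ?n))" by (simp only: x_def powr_powr mult.commute)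
      finally show ?thesis .
    qed
    have E4: "(1/2::real) powr (real (Suc j) * q) * (1/2) powr (real j * real ?n)
        = (1/2) powr q * (1/2) powr (real j * (q + real ?n))"
      by (simp only: powr_add[symmetric]) (simp add: algebra_simps)
    have "r (Suc j) powr q * V * r j ^ ?n = R powr q * V * R ^ ?n * ((1/2) powr (real (Suc j) * q) * (1/2) powr (real j * real ?n))"
      by (simp only: E1 E2 mult_ac)
    also have "\<dots> = R powr q * V * R ^ ?n * ((1/2) powr q * (1/2) powr (real j * (q + real ?n)))"
      by (simp only: E4)
    also have "\<dots> = c * x ^ j" by (simp only: E3 c_def mult_ac)
    finally show ?thesis .
  qed
  have term_bound: "(\<integral>\<^sup>+ z. ennreal (indicator (A j) z * norm z powr q) \<partial>lborel) \<le> ennreal (c * x ^ j)" for j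
  proof -
    have "(\<integral>\<^sup>+ z. ennreal (indicator (A j) z * norm z powr q) \<partial>lborel)
        \<le> (\<integral>\<^sup>+ z. ennreal (r (Suc j) powr q) * indicator (A j) z \<partial>lborel)"
    proof (rule nn_integral_mono)
      fix z :: 'a
      show "ennreal (indicator (A j) z * norm z powr q) \<le> ennreal (r (Suc j) powr q) * indicator (A j) z"
      proof (cases "z \<in> A j")
        case True
        then have "r (Suc j) < norm z" by (auto simp: A_def)
        then have "norm z powr q \<le> r (Suc j) powr q"
          using False r_pos[of "Suc j"] by (intro powr_mono2') auto
        then show ?thesis using True by (simp add: indicator_def)
      qed simp
    qed
    also have "\<dots> = ennreal (r (Suc j) powr q) * emeasure lborel (A j)"
      by (rule nn_integral_cmult_indicator[OF A_sets])
    also have "\<dots> \<le> ennreal (r (Suc j) powr q) * emeasure lborel (cball (0::'a) (r j))"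
      by (intro mult_left_mono emeasure_mono) (auto simp: A_def)
    also have "\<dots> = ennreal (r (Suc j) powr q * V * r j ^ ?n)"
      using r_pos[of j] by (simp add: emeasure_cball V_def ennreal_mult'' mult.assoc)
    also have "\<dots> = ennreal (c * x ^ j)" by (simp add: g_eq)
    finally show ?thesis .
  qed
  have meas: "(\<lambda>z::'a. indicator (cball 0 R) z * norm z powr q) \<in> borel_measurable lborel"
    by (intro borel_measurable_times borel_measurable_indicator powr_real_measurable) auto
  have pw: "ennreal (norm (indicator (cball 0 R) z * norm z powr q))
      \<le> (\<Sum>j. ennreal (indicator (A j) z * norm z powr q))" for z :: 'a
  proof (cases "z \<in> cball 0 R \<and> z \<noteq> 0")
    case True
    obtain j where j: "R * (1/2) ^ Suc j < norm z" "norm z \<le> R * (1/2) ^ j"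
      using dyadic_exists[OF R, of "norm z"] True by auto
    then have zA: "z \<in> A j" by (auto simp: A_def r_def)
    have "ennreal (norm (indicator (cball 0 R) z * norm z powr q)) = ennreal (indicator (A j) z * norm z powr q)"
      using True zA by (simp add: indicator_def)
    also have "\<dots> \<le> (\<Sum>j. ennreal (indicator (A j) z * norm z powr q))"
    proof -
      have gen: "(f::nat \<Rightarrow> ennreal) j \<le> suminf f" for f
        using sum_le_suminf[OF summableI, of "{j}" f] by simp
      show ?thesis by (rule gen)
    qed
    finally show ?thesis .
  next
    case False
    then have "indicator (cball 0 R) z * norm z powr q = 0" by (auto simp: indicator_def)
    then show ?thesis by (metis norm_zero ennreal_0 zero_le)
  qed
  have "(\<integral>\<^sup>+ z. ennreal (norm (indicator (cball 0 R) (z::'a) * norm z powr q)) \<partial>lborel)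
      \<le> (\<integral>\<^sup>+ z. (\<Sum>j. ennreal (indicator (A j) z * norm z powr q)) \<partial>lborel)"
    by (rule nn_integral_mono) (rule pw)
  also have "\<dots> = (\<Sum>j. \<integral>\<^sup>+ z. ennreal (indicator (A j) z * norm z powr q) \<partial>lborel)"
    by (rule nn_integral_suminf) (intro measurable_compose[OF _ measurable_ennreal] borel_measurable_times
        borel_measurable_indicator powr_real_measurable A_sets; simp)
  also have "\<dots> \<le> (\<Sum>j. ennreal (c * x ^ j))"
    by (intro suminf_le term_bound summableI)
  also have "\<dots> = ennreal (\<Sum>j. c * x ^ j)"
    using x c by (intro suminf_ennreal2 summable_mult summable_geometric) auto
  also have "\<dots> < \<infinity>" by simp
  finally show ?thesis by (intro integrableI_bounded meas)
qed

lemma latt_diff: "latt h (a - b) = latt h a - latt h b"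
  by (simp add: latt_def vec_eq_iff algebra_simps)

lemma tent_Cc:
  fixes c :: "real^'n"
  assumes h: "0 < h"
  shows "(\<lambda>y. max 0 (1 - 2 * dist y c / h)) \<in> Cc"
proof -
  have "continuous_on UNIV (\<lambda>y. max 0 (1 - 2 * dist y c / h))"
    using h by (intro continuous_intros) auto
  moreover have "{y. max 0 (1 - 2 * dist y c / h) \<noteq> 0} \<subseteq> cball c h"
  proof
    fix y assume "y \<in> {y. max 0 (1 - 2 * dist y c / h) \<noteq> 0}"
    then have "0 < 1 - 2 * dist y c / h" by (cases "1 - 2 * dist y c / h \<le> 0") auto
    then have "2 * dist y c / h < 1" by linarith
    then have "2 * dist y c < h" using h by (simp add: divide_less_eq)
    then have "dist y c \<le> h" using zero_le_dist[of y c] by linarith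
    then show "y \<in> cball c h" by (simp add: dist_commute)
  qed
  then have "bounded {y. max 0 (1 - 2 * dist y c / h) \<noteq> 0}"
    using bounded_cball bounded_subset by blast
  then have "compact_support (\<lambda>y. max 0 (1 - 2 * dist y c / h))"
    by (simp add: compact_support_def compact_closure)
  ultimately show ?thesis by (simp add: Cc_def)
qed

lemma tent_latt:
  fixes k k' :: "int^'n"
  assumes h: "0 < h"
  shows "max 0 (1 - 2 * dist (latt h k') (latt h k) / h) = (if k' = k then 1 else 0)"
proof (cases "k' = k")
  case False
  then have "k' - k \<noteq> 0" by simp
  then have "h \<le> norm (latt h (k' - k))" by (rule latt_norm_ge[OF _ h])
  then have "h \<le> dist (latt h k') (latt h k)" by (simp add: latt_diff dist_norm)
  then have "1 \<le> dist (latt h k') (latt h k) / h" using h by (simp add: le_divide_eq)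
  then show ?thesis using False by simp
qed simp

lemma lint_translate:
  fixes f :: "real^'n \<Rightarrow> real"
  assumes "f \<in> borel_measurable borel"
  shows "(LINT y|lborel. f y) = (LINT z|lborel. f (c + z))"
proof -
  have "(LINT y|lborel. f y) = integral\<^sup>L (distr lborel borel ((+) c)) f" by (simp add: lborel_distr_plus)
  also have "\<dots> = (LINT z|lborel. f (c + z))" by (rule integral_distr) (use assms in auto)
  finally show ?thesis .
qed

lemma lint_reflect:
  fixes f :: "real^'n \<Rightarrow> real"
  assumes "f \<in> borel_measurable borel"
  shows "(LINT y|lborel. f y) = (LINT z|lborel. f (- z))"
proof -
  have d: "distr lborel borel uminus = (lborel :: (real^'n) measure)"
    using lborel_affine[of "-1::real" "0::real^'n"] by (simp add: density_1)
  have "(LINT y|lborel. f y) = integral\<^sup>L (distr lborel borel uminus) f" by (simp add: d)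
  also have "\<dots> = (LINT z|lborel. f (- z))" by (rule integral_distr) (use assms in auto)
  finally show ?thesis .
qed

lemma round_tendsto:
  fixes x :: "real^'n"
  assumes S: "\<And>n. 0 < S n" "S \<longlonglongrightarrow> 0"
  shows "(\<lambda>n. latt (S n) (fl (S n) x)) \<longlonglongrightarrow> x"
proof -
  have "(\<lambda>n. latt (S n) (fl (S n) x) - x) \<longlonglongrightarrow> 0"
  proof (rule Lim_null_comparison)
    show "\<forall>\<^sub>F n in sequentially. norm (latt (S n) (fl (S n) x) - x) \<le> real CARD('n) * S n"
    proof (rule always_eventually, rule allI)
      fix n show "norm (latt (S n) (fl (S n) x) - x) \<le> real CARD('n) * S n" by (rule round_close[OF S(1)])
    qed
    show "(\<lambda>n. real CARD('n) * S n) \<longlonglongrightarrow> 0"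
      using tendsto_mult_right_zero[OF S(2)] by simp
  qed
  then have "(\<lambda>n. (latt (S n) (fl (S n) x) - x) + x) \<longlonglongrightarrow> 0 + x" by (intro tendsto_add tendsto_const)
  then show ?thesis by simp
qed

lemma Cc_integrable:
  fixes \<phi> :: "real^'n \<Rightarrow> real"
  assumes "\<phi> \<in> Cc" shows "integrable lborel \<phi>" and "\<phi> \<in> borel_measurable borel"
proof -
  define K where "K = closure {x. \<phi> x \<noteq> 0}"
  have K: "compact K" and c: "continuous_on UNIV \<phi>" using assms by (auto simp: Cc_def compact_support_def K_def)
  have "integrable lborel (\<lambda>x. indicator K x *\<^sub>R \<phi> x)"
    by (rule borel_integrable_compact[OF K continuous_on_subset[OF c]]) simp
  moreover have "(\<lambda>x. indicator K x *\<^sub>R \<phi> x) = \<phi>"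
  proof
    fix x show "indicator K x *\<^sub>R \<phi> x = \<phi> x"
    proof (cases "\<phi> x = 0")
      case False
      then have "x \<in> K" unfolding K_def by (metis (mono_tags) closure_subset mem_Collect_eq subsetD)
      then show ?thesis by simp
    qed simp
  qed
  ultimately show "integrable lborel \<phi>" by simp
  show "\<phi> \<in> borel_measurable borel" by (rule borel_measurable_continuous_onI[OF c])
qed

locale fsetting =
  fixes \<alpha> :: real and \<Phi> :: "(real^'n) \<times> (real^'n) \<Rightarrow> real" and R0 C :: real
  assumes alpha: "0 < \<alpha>" "\<alpha> < 2"
    and cont: "continuous_on UNIV \<Phi>"
    and R0: "1 \<le> R0" and supp: "\<And>p. \<Phi> p \<noteq> 0 \<Longrightarrow> norm p \<le> R0"
    and C: "0 \<le> C" and Hb: "\<And>a b. \<bar>\<Phi> (a, a + b) + \<Phi> (a, a - b)\<bar> \<le> C * (norm b)\<^sup>2"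
    and diag: "\<And>x. \<Phi> (x, x) = 0"
begin

definition s :: real where "s = real CARD('n) + \<alpha>"
definition H :: "real^'n \<Rightarrow> real^'n \<Rightarrow> real" where "H a b = (\<Phi> (a, a + b) + \<Phi> (a, a - b)) / 2"
definition J :: "real \<Rightarrow> real^'n \<Rightarrow> real^'n \<Rightarrow> real" where
  "J h a z = (if fl h z = 0 then 0 else H a (latt h (fl h z)) / norm (latt h (fl h z)) powr s)"
definition Ilim :: "real^'n \<Rightarrow> real" where "Ilim x = (LINT z|lborel. H x z / norm z powr s)"
definition R1 :: real where "R1 = 2 * R0 + real CARD('n)"
definition Dm :: "real^'n \<Rightarrow> real" where
  "Dm z = indicator (cball 0 R1) z * (C * ((2 * R0) powr (2 - s) + (1 + real CARD('n)) powr (s - 2) * norm z powr (2 - s)))"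

lemma s_pos: "0 < s" using alpha by (simp add: s_def)

lemma H_bound: "\<bar>H a b\<bar> \<le> C * (norm b)\<^sup>2"
proof -
  have "\<bar>H a b\<bar> = \<bar>\<Phi> (a, a + b) + \<Phi> (a, a - b)\<bar> / 2" by (simp add: H_def)
  also have "\<dots> \<le> C * (norm b)\<^sup>2 / 2" using Hb[of a b] by simp
  also have "\<dots> \<le> C * (norm b)\<^sup>2" using C by simp
  finally show ?thesis .
qed

lemma supp2: "\<Phi> (a, c) \<noteq> 0 \<Longrightarrow> norm a \<le> R0 \<and> norm c \<le> R0"
  using supp[of "(a, c)"] norm_fst_le[of a c] norm_snd_le[of c a] by auto

lemma H_zero: assumes "H a b \<noteq> 0" shows "norm b \<le> 2 * R0"
proof -
  have "\<Phi> (a, a + b) \<noteq> 0 \<or> \<Phi> (a, a - b) \<noteq> 0" using assms by (auto simp: H_def)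
  then show ?thesis
  proof
    assume "\<Phi> (a, a + b) \<noteq> 0"
    then have "norm a \<le> R0" "norm (a + b) \<le> R0" using supp2 by blast+
    moreover have "norm b \<le> norm a + norm (a + b)" using norm_triangle_ineq4[of "a + b" a] by simp
    ultimately show ?thesis by simp
  next
    assume "\<Phi> (a, a - b) \<noteq> 0"
    then have "norm a \<le> R0" "norm (a - b) \<le> R0" using supp2 by blast+
    moreover have "norm b \<le> norm a + norm (a - b)" using norm_triangle_ineq4[of a "a - b"] by simp
    ultimately show ?thesis by simp
  qed
qed

lemma Dm_nonneg: "0 \<le> Dm z"
  using C by (simp add: Dm_def)

lemma Dm_integrable: "integrable lborel Dm"
proof -
  have q: "- real DIM(real^'n) < 2 - s" using alpha by (simp add: s_def)
  have R1: "0 < R1" using R0 by (simp add: R1_def)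
  have i1: "integrable lborel (\<lambda>z::real^'n. indicator (cball 0 R1) z * norm z powr (2 - s))"
    by (rule sing_int[OF q R1])
  have i2: "integrable lborel (\<lambda>z::real^'n. indicat_real (cball 0 R1) z)"
    using emeasure_lborel_cball_finite[of "0::real^'n" R1]
    by (intro integrable_real_indicator) (auto simp: top_unique infinity_ennreal_def)
  have "Dm = (\<lambda>z. (C * (2 * R0) powr (2 - s)) * indicator (cball 0 R1) z +
       (C * (1 + real CARD('n)) powr (s - 2)) * (indicator (cball 0 R1) z * norm z powr (2 - s)))"
    unfolding Dm_def by (intro ext) (simp add: ring_distribs mult_ac)
  then show ?thesis using i1 i2 by simp
qed

lemma key_bound:
  assumes b: "b \<noteq> 0" "norm b \<le> 2 * R0" and z: "z \<noteq> 0" "norm z \<le> (1 + real CARD('n)) * norm b" "norm z \<le> R1"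
  shows "\<bar>H a b / norm b powr s\<bar> \<le> Dm z"
proof -
  let ?N = "1 + real CARD('n)"
  have nb: "0 < norm b" using b by simp
  have nz: "0 < norm z" using z by simp
  have "\<bar>H a b / norm b powr s\<bar> = \<bar>H a b\<bar> / norm b powr s" by simp
  also have "\<dots> \<le> C * (norm b)\<^sup>2 / norm b powr s"
    by (rule divide_right_mono[OF H_bound]) simp
  also have "\<dots> = C * norm b powr (2 - s)"
  proof -
    have "norm b powr (2 - s) = norm b powr 2 / norm b powr s" by (rule powr_diff)
    also have "norm b powr 2 = (norm b)\<^sup>2" using nb by (simp add: powr_numeral)
    finally show ?thesis by simp
  qed
  also have "\<dots> \<le> C * ((2 * R0) powr (2 - s) + ?N powr (s - 2) * norm z powr (2 - s))"
  proof (rule mult_left_mono[OF _ C])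
    show "norm b powr (2 - s) \<le> (2 * R0) powr (2 - s) + ?N powr (s - 2) * norm z powr (2 - s)"
    proof (cases "0 \<le> 2 - s")
      case True
      have "norm b powr (2 - s) \<le> (2 * R0) powr (2 - s)" using True b by (intro powr_mono2) auto
      then show ?thesis by (simp add: add_increasing2)
    next
      case False
      have "norm z / ?N \<le> norm b" using z(2) by (simp add: divide_le_eq mult.commute)
      then have "norm b powr (2 - s) \<le> (norm z / ?N) powr (2 - s)"
        using False nz by (intro powr_mono2') auto
      also have "\<dots> = ?N powr (s - 2) * norm z powr (2 - s)"
      proof -
        have "(norm z / ?N) powr (2 - s) = norm z powr (2 - s) / ?N powr (2 - s)" by (simp add: powr_divide)
        also have "?N powr (s - 2) = inverse (?N powr (2 - s))" using powr_minus[of ?N "2 - s"] by simp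
        ultimately show ?thesis by (simp add: divide_inverse mult.commute)
      qed
      finally show ?thesis by (simp add: add_increasing)
    qed
  qed
  also have "\<dots> = Dm z" using z(3) by (simp add: Dm_def)
  finally show ?thesis .
qed

lemma J_bound: assumes h: "0 < h" "h < 1" shows "\<bar>J h a z\<bar> \<le> Dm z"
proof (cases "fl h z = 0 \<or> H a (latt h (fl h z)) = 0")
  case True then show ?thesis using Dm_nonneg by (auto simp: J_def)
next
  case False
  let ?m = "fl h z" let ?b = "latt h (fl h z)"
  have m: "?m \<noteq> 0" and Hn: "H a ?b \<noteq> 0" using False by auto
  have bh: "h \<le> norm ?b" by (rule latt_norm_ge[OF m h(1)])
  have bR: "norm ?b \<le> 2 * R0" by (rule H_zero[OF Hn])
  have cl: "norm (?b - z) \<le> real CARD('n) * h" by (rule round_close[OF h(1)])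
  have z0: "z \<noteq> 0"
  proof
    assume "z = 0"
    then have "?m = 0" by (simp add: fl_def vec_eq_iff)
    then show False using m by simp
  qed
  have tri: "norm z \<le> norm ?b + norm (?b - z)" using norm_triangle_ineq4[of ?b "?b - z"] by simp
  have e: "real CARD('n) * h \<le> real CARD('n) * norm ?b" by (rule mult_left_mono[OF bh]) simp
  have "norm z \<le> norm ?b + real CARD('n) * norm ?b" using tri cl e by linarith
  then have "norm z \<le> (1 + real CARD('n)) * norm ?b" by (simp add: algebra_simps)
  moreover have "norm z \<le> R1"
  proof -
    have e2: "real CARD('n) * h \<le> real CARD('n) * 1" using h by (intro mult_left_mono) auto
    show ?thesis unfolding R1_def using tri cl bR e2 by linarith
  qed
  moreover have "?b \<noteq> 0" using bh h by auto
  ultimately have "\<bar>H a ?b / norm ?b powr s\<bar> \<le> Dm z" using key_bound bR z0 by blast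
  then show ?thesis using m by (simp add: J_def)
qed

lemma lim_bound: "\<bar>H x z / norm z powr s\<bar> \<le> Dm z"
proof (cases "H x z = 0")
  case True then show ?thesis using Dm_nonneg by simp
next
  case False
  have zR: "norm z \<le> 2 * R0" by (rule H_zero[OF False])
  have z0: "z \<noteq> 0" using False by (auto simp: H_def diag)
  show ?thesis
  proof (rule key_bound[OF z0 zR z0])
    show "norm z \<le> (1 + real CARD('n)) * norm z" by (simp add: algebra_simps)
    show "norm z \<le> R1" using zR by (simp add: R1_def)
  qed
qed


lemma J_meas: assumes "0 < h" shows "J h a \<in> borel_measurable lborel"
proof -
  define g where "g m = (if m = 0 then 0 else H a (latt h m) / norm (latt h m) powr s)" for m :: "int^'n"
  have "J h a = (\<lambda>z. g (fl h z))" by (simp add: J_def g_def fun_eq_iff)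
  then show ?thesis using step_measurable[OF assms] by simp
qed

lemma Phi_isCont: "isCont \<Phi> p"
  by (metis cont continuous_on_eq_continuous_at open_UNIV UNIV_I)

lemma H_cont: "continuous_on UNIV (H x)"
proof -
  have c1: "continuous_on UNIV (\<lambda>z. \<Phi> (x, x + z))"
    by (rule continuous_on_compose2[OF cont]) (auto intro!: continuous_intros)
  have c2: "continuous_on UNIV (\<lambda>z. \<Phi> (x, x - z))"
    by (rule continuous_on_compose2[OF cont]) (auto intro!: continuous_intros)
  show ?thesis unfolding H_def[abs_def] using c1 c2 by (intro continuous_intros) auto
qed

lemma lim_meas: "(\<lambda>z. H x z / norm z powr s) \<in> borel_measurable lborel"
proof -
  have "H x \<in> borel_measurable borel" by (rule borel_measurable_continuous_onI[OF H_cont])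
  then have m1: "H x \<in> borel_measurable lborel" by simp
  have m2: "(\<lambda>z::real^'n. norm z powr s) \<in> borel_measurable lborel"
    by (intro powr_real_measurable borel_measurable_norm) auto
  show ?thesis using m1 m2 by (rule borel_measurable_divide)
qed

lemma J_integrable: assumes "0 < h" "h < 1" shows "integrable lborel (J h a)"
  by (rule Bochner_Integration.integrable_bound[OF Dm_integrable J_meas[OF assms(1)]])
     (use J_bound[OF assms] Dm_nonneg in auto)

lemma lim_integrable: "integrable lborel (\<lambda>z. H x z / norm z powr s)"
  by (rule Bochner_Integration.integrable_bound[OF Dm_integrable lim_meas])
     (use lim_bound Dm_nonneg in auto)

lemma inner_bound: assumes "0 < h" "h < 1" shows "\<bar>LINT z|lborel. J h a z\<bar> \<le> (LINT z|lborel. Dm z)"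
  using Bochner_Integration.integral_norm_bound_integral[OF J_integrable[OF assms] Dm_integrable]
    J_bound[OF assms] by simp

lemma conv_point:
  assumes S: "\<And>n. 0 < S n" "S \<longlonglongrightarrow> 0" and a: "a \<longlonglongrightarrow> x" and z: "z \<noteq> 0"
  shows "(\<lambda>n. J (S n) (a n) z) \<longlonglongrightarrow> H x z / norm z powr s"
proof -
  define b where "b n = latt (S n) (fl (S n) z)" for n
  have "(\<lambda>n. b n - z) \<longlonglongrightarrow> 0"
  proof (rule Lim_null_comparison)
    show "\<forall>\<^sub>F n in sequentially. norm (b n - z) \<le> real CARD('n) * S n"
    proof (rule always_eventually, rule allI)
      fix n show "norm (b n - z) \<le> real CARD('n) * S n" unfolding b_def by (rule round_close[OF S(1)])
    qed
    show "(\<lambda>n. real CARD('n) * S n) \<longlonglongrightarrow> 0"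
      using tendsto_mult_right_zero[OF S(2)] by simp
  qed
  then have "(\<lambda>n. (b n - z) + z) \<longlonglongrightarrow> 0 + z" by (intro tendsto_add tendsto_const)
  then have bz: "b \<longlonglongrightarrow> z" by simp
  have ev: "\<forall>\<^sub>F n in sequentially. b n \<noteq> 0" by (rule tendsto_imp_eventually_ne[OF bz z])
  have ev2: "\<forall>\<^sub>F n in sequentially. H (a n) (b n) / norm (b n) powr s = J (S n) (a n) z"
  proof (rule eventually_mono[OF ev])
    fix n assume "b n \<noteq> 0"
    then have "fl (S n) z \<noteq> 0" by (auto simp: b_def latt_zero)
    then show "H (a n) (b n) / norm (b n) powr s = J (S n) (a n) z" by (simp add: J_def b_def)
  qed
  have t1: "(\<lambda>n. \<Phi> (a n, a n + b n)) \<longlonglongrightarrow> \<Phi> (x, x + z)"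
    by (rule isCont_tendsto_compose[OF Phi_isCont]) (intro tendsto_intros a bz)
  have t2: "(\<lambda>n. \<Phi> (a n, a n - b n)) \<longlonglongrightarrow> \<Phi> (x, x - z)"
    by (rule isCont_tendsto_compose[OF Phi_isCont]) (intro tendsto_intros a bz)
  have tH: "(\<lambda>n. H (a n) (b n)) \<longlonglongrightarrow> H x z"
    unfolding H_def using t1 t2 by (intro tendsto_intros) auto
  have tN: "(\<lambda>n. norm (b n) powr s) \<longlonglongrightarrow> norm z powr s"
    using z by (intro tendsto_powr tendsto_norm bz tendsto_const) auto
  have "(\<lambda>n. H (a n) (b n) / norm (b n) powr s) \<longlonglongrightarrow> H x z / norm z powr s"
    using z by (intro tendsto_divide tH tN) auto
  then show ?thesis using tendsto_cong[OF ev2] by blast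
qed

lemma inner_conv:
  assumes S: "\<And>n. 0 < S n" "\<And>n. S n < 1" "S \<longlonglongrightarrow> 0" and a: "a \<longlonglongrightarrow> x"
  shows "(\<lambda>n. LINT z|lborel. J (S n) (a n) z) \<longlonglongrightarrow> Ilim x"
  unfolding Ilim_def
proof (rule integral_dominated_convergence[where w = Dm])
  show "(\<lambda>z. H x z / norm z powr s) \<in> borel_measurable lborel" by (rule lim_meas)
  show "\<And>i. J (S i) (a i) \<in> borel_measurable lborel" using J_meas S(1) by blast
  show "integrable lborel Dm" by (rule Dm_integrable)
  show "AE z in lborel. (\<lambda>i. J (S i) (a i) z) \<longlonglongrightarrow> H x z / norm z powr s"
    using AE_lborel_singleton[of 0] by eventually_elim (rule conv_point[OF S(1) S(3) a])
  show "\<And>i. AE z in lborel. norm (J (S i) (a i) z) \<le> Dm z"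
    using J_bound[OF S(1) S(2)] by simp
qed


lemma psi_eq:
  fixes \<psi> :: "int^'n \<Rightarrow> real" and k :: "int^'n"
  assumes h: "0 < h" "h < 1"
    and hyp: "\<And>\<phi>'. \<phi>' \<in> Cc \<Longrightarrow>
           (\<Sum>\<^sub>\<infinity>k. h ^ CARD('n) * (\<phi>' (latt h k) * \<psi> k))
         = (\<Sum>\<^sub>\<infinity>(k, j)\<in>{(k, j). k \<noteq> j}.
              h ^ (2 * CARD('n)) * (\<phi>' (latt h k) * \<Phi> (latt h k, latt h j))
                / norm (latt h k - latt h j) powr (real CARD('n) + \<alpha>))"
  shows "\<psi> k = (LINT z|lborel. J h (latt h k) z)"
proof -
  let ?n = "CARD('n)"
  define a where "a = latt h k"
  define \<phi>0 where "\<phi>0 = (\<lambda>y. max 0 (1 - 2 * dist y a / h))"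
  have \<phi>0: "\<phi>0 \<in> Cc" unfolding \<phi>0_def by (rule tent_Cc[OF h(1)])
  have \<phi>0_latt: "\<phi>0 (latt h k') = (if k' = k then 1 else 0)" for k'
    unfolding \<phi>0_def a_def by (rule tent_latt[OF h(1)])
  define f where "f k' = h ^ ?n * (\<phi>0 (latt h k') * \<psi> k')" for k'
  define g where "g = (\<lambda>(k'::int^'n, j::int^'n). h ^ (2 * ?n) * (\<phi>0 (latt h k') * \<Phi> (latt h k', latt h j))
                / norm (latt h k' - latt h j) powr s)"
  have H0: "(\<Sum>\<^sub>\<infinity>k. f k) = (\<Sum>\<^sub>\<infinity>kj\<in>{(k, j). k \<noteq> j}. g kj)"
    using hyp[OF \<phi>0] unfolding f_def g_def s_def by simp
  have L: "(\<Sum>\<^sub>\<infinity>k. f k) = h ^ ?n * \<psi> k"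
  proof -
    have "(\<Sum>\<^sub>\<infinity>k. f k) = (\<Sum>\<^sub>\<infinity>k'\<in>{k}. f k')"
      by (rule infsum_cong_neutral) (auto simp: f_def \<phi>0_latt)
    also have "\<dots> = h ^ ?n * \<psi> k" by (simp add: f_def \<phi>0_latt)
    finally show ?thesis .
  qed
  define G where "G j = \<Phi> (a, latt h j) / norm (a - latt h j) powr s" for j
  have R: "(\<Sum>\<^sub>\<infinity>kj\<in>{(k, j). k \<noteq> j}. g kj) = h ^ (2 * ?n) * (\<Sum>\<^sub>\<infinity>j\<in>{j. j \<noteq> k}. G j)"
  proof -
    have "(\<Sum>\<^sub>\<infinity>kj\<in>{(k, j). k \<noteq> j}. g kj) = (\<Sum>\<^sub>\<infinity>kj\<in>Pair k ` {j. j \<noteq> k}. g kj)"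
      by (rule infsum_cong_neutral) (auto simp: g_def \<phi>0_latt)
    also have "\<dots> = (\<Sum>\<^sub>\<infinity>j\<in>{j. j \<noteq> k}. g (k, j))"
      by (subst infsum_reindex) (auto simp: inj_on_def o_def)
    also have "\<dots> = (\<Sum>\<^sub>\<infinity>j\<in>{j. j \<noteq> k}. h ^ (2 * ?n) * G j)"
      by (rule infsum_cong) (simp add: g_def G_def \<phi>0_latt a_def)
    also have "\<dots> = h ^ (2 * ?n) * (\<Sum>\<^sub>\<infinity>j\<in>{j. j \<noteq> k}. G j)" by (rule infsum_cmult_right')
    finally show ?thesis .
  qed
  define P where "P m = \<Phi> (a, a + latt h m) / norm (latt h m) powr s" for m
  define Q where "Q m = \<Phi> (a, a - latt h m) / norm (latt h m) powr s" for m
  have reidx: "(\<Sum>\<^sub>\<infinity>j\<in>{j. j \<noteq> k}. G j) = (\<Sum>\<^sub>\<infinity>m\<in>{m. m \<noteq> 0}. P m)"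
  proof -
    have bij: "bij_betw (\<lambda>m. k + m) {m. m \<noteq> 0} {j. j \<noteq> k}"
      by (rule bij_betwI[where g = "\<lambda>j. j - k"]) auto
    have "(\<Sum>\<^sub>\<infinity>m\<in>{m. m \<noteq> 0}. G (k + m)) = (\<Sum>\<^sub>\<infinity>j\<in>{j. j \<noteq> k}. G j)"
      by (rule infsum_reindex_bij_betw[OF bij])
    moreover have "G (k + m) = P m" for m
      by (simp add: G_def P_def latt_add a_def)
    ultimately show ?thesis by simp
  qed
  define N where "N = \<lceil>2 * R0 / h\<rceil>"
  define T where "T = {m::int^'n. \<forall>i. \<bar>m $ i\<bar> \<le> N} - {0}"
  have T: "finite T" using finite_intbox[of N] by (simp add: T_def)
  have inT: "m \<in> T" if "m \<noteq> 0" "norm (latt h m) \<le> 2 * R0" for m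
    using latt_norm_le_box[OF that(2) h(1)] that(1) by (simp add: T_def N_def)
  have P0: "P m = 0" if "m \<notin> T" "m \<noteq> 0" for m
  proof (rule ccontr)
    assume "P m \<noteq> 0"
    then have "\<Phi> (a, a + latt h m) \<noteq> 0" by (auto simp: P_def)
    then have "norm a \<le> R0" "norm (a + latt h m) \<le> R0" using supp2 by blast+
    moreover have "norm (latt h m) \<le> norm a + norm (a + latt h m)"
      using norm_triangle_ineq4[of "a + latt h m" a] by simp
    ultimately have "norm (latt h m) \<le> 2 * R0" by simp
    then show False using inT that by blast
  qed
  have PT: "(\<Sum>\<^sub>\<infinity>m\<in>{m. m \<noteq> 0}. P m) = (\<Sum>m\<in>T. P m)"
  proof -
    have "(\<Sum>\<^sub>\<infinity>m\<in>{m. m \<noteq> 0}. P m) = (\<Sum>\<^sub>\<infinity>m\<in>T. P m)"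
    proof (rule infsum_cong_neutral)
      show "\<And>x. x \<in> T - {m. m \<noteq> 0} \<Longrightarrow> P x = 0" by (auto simp: T_def)
      show "\<And>x. x \<in> {m. m \<noteq> 0} - T \<Longrightarrow> P x = 0" using P0 by auto
    qed auto
    then show ?thesis using T by simp
  qed
  have PQ: "(\<Sum>m\<in>T. P m) = (\<Sum>m\<in>T. Q m)"
  proof (rule sum.reindex_bij_witness[where i = uminus and j = uminus])
    show "\<And>m. m \<in> T \<Longrightarrow> - m \<in> T" by (auto simp: T_def)
    show "\<And>m. m \<in> T \<Longrightarrow> Q (- m) = P m" by (simp add: P_def Q_def latt_minus)
  qed (auto simp: T_def)
  define gg where "gg m = (if m = 0 then 0 else H a (latt h m) / norm (latt h m) powr s)" for m :: "int^'n"
  have Jeq: "J h a = (\<lambda>z. gg (fl h z))" by (simp add: J_def gg_def fun_eq_iff)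
  have gg0: "gg m = 0" if "m \<notin> T" for m
  proof (cases "m = 0")
    case False
    show ?thesis
    proof (rule ccontr)
      assume "gg m \<noteq> 0"
      then have "H a (latt h m) \<noteq> 0" using False by (auto simp: gg_def)
      then have "norm (latt h m) \<le> 2 * R0" by (rule H_zero)
      then show False using inT False that by blast
    qed
  qed (simp add: gg_def)
  have I: "(LINT z|lborel. J h a z) = h ^ ?n * (\<Sum>m\<in>T. gg m)"
    unfolding Jeq by (rule step_integral(2)[OF h(1) T gg0])
  have gPQ: "(\<Sum>m\<in>T. gg m) = (\<Sum>m\<in>T. P m)"
  proof -
    have "(\<Sum>m\<in>T. gg m) = (\<Sum>m\<in>T. (P m + Q m) / 2)"
      by (rule sum.cong) (auto simp: gg_def T_def P_def Q_def H_def add_divide_distrib)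
    also have "\<dots> = ((\<Sum>m\<in>T. P m) + (\<Sum>m\<in>T. Q m)) / 2"
      by (simp only: sum_divide_distrib[symmetric] sum.distrib)
    also have "\<dots> = (\<Sum>m\<in>T. P m)" using PQ by simp
    finally show ?thesis .
  qed
  have "h ^ ?n * \<psi> k = h ^ (2 * ?n) * (\<Sum>m\<in>T. P m)"
    using H0 L R reidx PT by simp
  then have "h ^ ?n * \<psi> k = h ^ ?n * (h ^ ?n * (\<Sum>m\<in>T. P m))"
    by (simp add: power_add[symmetric] mult_2)
  then have "\<psi> k = h ^ ?n * (\<Sum>m\<in>T. P m)" using h(1) by simp
  then show ?thesis using I gPQ by (simp add: a_def)
qed


lemma Phi_bounded: "\<exists>Mb\<ge>0. \<forall>p. \<bar>\<Phi> p\<bar> \<le> Mb"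
  by (rule cont_supp_bounded[OF cont compact_cball[of 0 R0]]) (use supp in auto)

lemma frac_eq: "frac_lap_diag \<alpha> \<Phi> x = Ilim x"
proof -
  obtain Mb where Mb: "0 \<le> Mb" "\<And>p. \<bar>\<Phi> p\<bar> \<le> Mb" using Phi_bounded by blast
  define Hq where "Hq z = H x z / norm z powr s" for z
  define Ag where "Ag \<sigma> z = \<Phi> (x, x + \<sigma> *\<^sub>R z) / norm z powr s" for \<sigma> :: real and z :: "real^'n"
  define E where "E \<epsilon> = {z::real^'n. \<epsilon> < norm z}" for \<epsilon> :: real
  have Eb: "E \<epsilon> \<in> sets borel" for \<epsilon>
    unfolding E_def by (intro borel_open open_Collect_less continuous_intros)
  have measAg: "Ag \<sigma> \<in> borel_measurable borel" for \<sigma>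
  proof -
    have "continuous_on UNIV (\<lambda>z. \<Phi> (x, x + \<sigma> *\<^sub>R z))"
      by (rule continuous_on_compose2[OF cont]) (auto intro!: continuous_intros)
    then have m1: "(\<lambda>z. \<Phi> (x, x + \<sigma> *\<^sub>R z)) \<in> borel_measurable borel"
      by (rule borel_measurable_continuous_onI)
    have m2: "(\<lambda>z::real^'n. norm z powr s) \<in> borel_measurable borel"
      by (intro powr_real_measurable borel_measurable_norm) auto
    show ?thesis unfolding Ag_def[abs_def] using m1 m2 by (rule borel_measurable_divide)
  qed
  have measI: "(\<lambda>z. indicator (E \<epsilon>) z * Ag \<sigma> z) \<in> borel_measurable borel" for \<epsilon> \<sigma>
    using Eb measAg by (intro borel_measurable_times borel_measurable_indicator) auto
  have intAg: "integrable lborel (\<lambda>z. indicator (E \<epsilon>) z * Ag \<sigma> z)" if e: "0 < \<epsilon>" and sg: "\<bar>\<sigma>\<bar> = 1" for \<epsilon> \<sigma>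
  proof (rule Bochner_Integration.integrable_bound)
    show "integrable lborel (\<lambda>z::real^'n. Mb / \<epsilon> powr s * indicat_real (cball 0 (2 * R0)) z)"
      using emeasure_lborel_cball_finite[of "0::real^'n" "2 * R0"]
      by (intro integrable_mult_right integrable_real_indicator) (auto simp: top_unique infinity_ennreal_def)
    show "(\<lambda>z. indicator (E \<epsilon>) z * Ag \<sigma> z) \<in> borel_measurable lborel" using measI by simp
    show "AE z in lborel. norm (indicator (E \<epsilon>) z * Ag \<sigma> z) \<le> norm (Mb / \<epsilon> powr s * indicat_real (cball 0 (2 * R0)) z)"
    proof (rule AE_I2)
      fix z :: "real^'n"
      show "norm (indicator (E \<epsilon>) z * Ag \<sigma> z) \<le> norm (Mb / \<epsilon> powr s * indicat_real (cball 0 (2 * R0)) z)"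
      proof (cases "z \<in> E \<epsilon> \<and> \<Phi> (x, x + \<sigma> *\<^sub>R z) \<noteq> 0")
        case True
        then have ez: "\<epsilon> < norm z" by (simp add: E_def)
        have "norm x \<le> R0" "norm (x + \<sigma> *\<^sub>R z) \<le> R0" using supp2 True by blast+
        moreover have "norm (\<sigma> *\<^sub>R z) \<le> norm x + norm (x + \<sigma> *\<^sub>R z)"
          using norm_triangle_ineq4[of "x + \<sigma> *\<^sub>R z" x] by simp
        moreover have "norm (\<sigma> *\<^sub>R z) = norm z" using sg by simp
        ultimately have "norm z \<le> 2 * R0" by linarith
        then have zR: "z \<in> cball 0 (2 * R0)" by simp
        have ps: "\<epsilon> powr s \<le> norm z powr s" using ez e s_pos by (intro powr_mono2) auto
        have pos: "0 < \<epsilon> powr s" using e by simp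
        have "\<bar>Ag \<sigma> z\<bar> = \<bar>\<Phi> (x, x + \<sigma> *\<^sub>R z)\<bar> / norm z powr s" by (simp add: Ag_def)
        also have "\<dots> \<le> Mb / norm z powr s" by (rule divide_right_mono[OF Mb(2)]) simp
        also have "\<dots> \<le> Mb / \<epsilon> powr s" by (rule divide_left_mono[OF ps Mb(1)]) (use pos ps in \<open>auto intro!: mult_pos_pos\<close>)
        finally show ?thesis using True zR Mb(1) pos by (simp add: indicator_def)
      next
        case False
        then have "indicator (E \<epsilon>) z * Ag \<sigma> z = 0" by (auto simp: Ag_def indicator_def)
        then show ?thesis by (metis norm_ge_zero norm_zero)
      qed
    qed
  qed
  have Feq: "(LINT y:{y. dist x y > \<epsilon>}|lborel.
        (\<Phi> (x, y) - \<Phi> (x, x)) / norm (x - y) powr (real CARD('n) + \<alpha>))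
      = (LINT z|lborel. indicator (E \<epsilon>) z * Hq z)" if e: "0 < \<epsilon>" for \<epsilon>
  proof -
    have m0: "(\<lambda>y. indicator {y. dist x y > \<epsilon>} y * (\<Phi> (x, y) / norm (x - y) powr s)) \<in> borel_measurable borel"
    proof -
      have "(\<lambda>y. indicator {y. dist x y > \<epsilon>} y * (\<Phi> (x, y) / norm (x - y) powr s))
          = (\<lambda>y. indicator (E \<epsilon>) (y - x) * Ag 1 (y - x))"
        by (auto simp: fun_eq_iff E_def Ag_def indicator_def dist_norm norm_minus_commute)
      moreover have "(\<lambda>y. indicator (E \<epsilon>) (y - x) * Ag 1 (y - x)) \<in> borel_measurable borel"
        by (rule measurable_compose[OF _ measI]) (intro borel_measurable_diff; simp)
      ultimately show ?thesis by simp
    qed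
    have "(LINT y:{y. dist x y > \<epsilon>}|lborel. (\<Phi> (x, y) - \<Phi> (x, x)) / norm (x - y) powr (real CARD('n) + \<alpha>))
        = (LINT y|lborel. indicator {y. dist x y > \<epsilon>} y * (\<Phi> (x, y) / norm (x - y) powr s))"
      by (simp add: set_lebesgue_integral_def diag s_def)
    also have "\<dots> = (LINT z|lborel. indicator {y. dist x y > \<epsilon>} (x + z) * (\<Phi> (x, x + z) / norm (x - (x + z)) powr s))"
      by (rule lint_translate[OF m0])
    also have "\<dots> = (LINT z|lborel. indicator (E \<epsilon>) z * Ag 1 z)"
      by (simp add: E_def Ag_def dist_norm indicator_def)
    finally have F1: "(LINT y:{y. dist x y > \<epsilon>}|lborel. (\<Phi> (x, y) - \<Phi> (x, x)) / norm (x - y) powr (real CARD('n) + \<alpha>))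
        = (LINT z|lborel. indicator (E \<epsilon>) z * Ag 1 z)" .
    have "(LINT z|lborel. indicator (E \<epsilon>) z * Ag 1 z) = (LINT z|lborel. indicator (E \<epsilon>) (- z) * Ag 1 (- z))"
      by (rule lint_reflect[OF measI])
    also have "\<dots> = (LINT z|lborel. indicator (E \<epsilon>) z * Ag (-1) z)"
      by (simp add: E_def Ag_def indicator_def)
    finally have F2: "(LINT z|lborel. indicator (E \<epsilon>) z * Ag 1 z) = (LINT z|lborel. indicator (E \<epsilon>) z * Ag (-1) z)" .
    have "(LINT z|lborel. indicator (E \<epsilon>) z * Hq z)
        = (LINT z|lborel. (indicator (E \<epsilon>) z * Ag 1 z + indicator (E \<epsilon>) z * Ag (-1) z) / 2)"
    proof (rule Bochner_Integration.integral_cong[OF refl])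
      fix z
      have e: "\<And>i a b c. (i::real) * (((a+b)/2)/c) = (i*(a/c) + i*(b/c))/2"
        by (simp add: add_divide_distrib ring_distribs)
      show "indicator (E \<epsilon>) z * Hq z = (indicator (E \<epsilon>) z * Ag 1 z + indicator (E \<epsilon>) z * Ag (-1) z) / 2"
        unfolding Hq_def H_def Ag_def by (simp only: e scaleR_one scaleR_minus1_left diff_conv_add_uminus)
    qed
    also have "\<dots> = ((LINT z|lborel. indicator (E \<epsilon>) z * Ag 1 z) + (LINT z|lborel. indicator (E \<epsilon>) z * Ag (-1) z)) / 2"
      using intAg[OF e, of 1] intAg[OF e, of "-1"] by simp
    also have "\<dots> = (LINT z|lborel. indicator (E \<epsilon>) z * Ag 1 z)" using F2 by simp
    finally show ?thesis using F1 by simp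
  qed
  have lim: "((\<lambda>\<epsilon>. LINT z|lborel. indicator (E \<epsilon>) z * Hq z) \<longlongrightarrow> Ilim x) (at_right 0)"
  proof (rule tendsto_at_right_sequentially[of 0 1])
    fix S :: "nat \<Rightarrow> real" assume S: "\<And>n. 0 < S n" "S \<longlonglongrightarrow> 0"
    show "(\<lambda>n. LINT z|lborel. indicator (E (S n)) z * Hq z) \<longlonglongrightarrow> Ilim x"
      unfolding Ilim_def Hq_def[symmetric]
    proof (rule integral_dominated_convergence[where w = Dm])
      show "Hq \<in> borel_measurable lborel" unfolding Hq_def by (rule lim_meas)
      show "\<And>i. (\<lambda>z. indicator (E (S i)) z * Hq z) \<in> borel_measurable lborel"
        unfolding Hq_def using Eb lim_meas by (intro borel_measurable_times borel_measurable_indicator) auto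
      show "integrable lborel Dm" by (rule Dm_integrable)
      show "AE z in lborel. (\<lambda>i. indicator (E (S i)) z * Hq z) \<longlonglongrightarrow> Hq z"
        using AE_lborel_singleton[of 0]
      proof eventually_elim
        case (elim z)
        then have "0 < norm z" by simp
        then have "\<forall>\<^sub>F i in sequentially. S i < norm z" by (rule order_tendstoD(2)[OF S(2)])
        then have "\<forall>\<^sub>F i in sequentially. indicator (E (S i)) z * Hq z = Hq z"
          by eventually_elim (simp add: E_def)
        then show ?case by (rule tendsto_eventually)
      qed
      show "\<And>i. AE z in lborel. norm (indicator (E (S i)) z * Hq z) \<le> Dm z"
      proof (intro AE_I2)
        fix i z
        have "norm (indicator (E (S i)) z * Hq z) \<le> \<bar>Hq z\<bar>" by (simp add: indicator_def)
        also have "\<dots> \<le> Dm z" unfolding Hq_def by (rule lim_bound)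
        finally show "norm (indicator (E (S i)) z * Hq z) \<le> Dm z" .
      qed
    qed
  qed simp
  have "((\<lambda>\<epsilon>. LINT y:{y. dist x y > \<epsilon>}|lborel.
        (\<Phi> (x, y) - \<Phi> (x, x)) / norm (x - y) powr (real CARD('n) + \<alpha>)) \<longlongrightarrow> Ilim x) (at_right 0)"
  proof (rule Lim_transform_eventually[OF lim])
    show "\<forall>\<^sub>F \<epsilon> in at_right 0. (LINT z|lborel. indicator (E \<epsilon>) z * Hq z) =
        (LINT y:{y. dist x y > \<epsilon>}|lborel. (\<Phi> (x, y) - \<Phi> (x, x)) / norm (x - y) powr (real CARD('n) + \<alpha>))"
      using eventually_at_right_less[of 0] by eventually_elim (simp add: Feq)
  qed
  then show ?thesis unfolding frac_lap_diag_def by (rule tendsto_Lim[OF trivial_limit_at_right_real])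
qed


lemma main:
  fixes \<psi> :: "real \<Rightarrow> int^'n \<Rightarrow> real" and \<phi> :: "real^'n \<Rightarrow> real"
  assumes hyp: "\<And>h \<phi>'. 0 < h \<Longrightarrow> h < 1 \<Longrightarrow> \<phi>' \<in> Cc \<Longrightarrow>
           (\<Sum>\<^sub>\<infinity>k. h ^ CARD('n) * (\<phi>' (latt h k) * \<psi> h k))
         = (\<Sum>\<^sub>\<infinity>(k, j)\<in>{(k, j). k \<noteq> j}.
              h ^ (2 * CARD('n)) * (\<phi>' (latt h k) * \<Phi> (latt h k, latt h j))
                / norm (latt h k - latt h j) powr (real CARD('n) + \<alpha>))"
    and \<phi>: "\<phi> \<in> Cc"
  shows "((\<lambda>h. LINT x|lborel. Qpc (\<psi> h) h x * \<phi> x)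
           \<longlongrightarrow> (LINT x|lborel. \<phi> x * frac_lap_diag \<alpha> \<Phi> x)) (at_right 0)"
proof -
  define Dint where "Dint = (LINT z|lborel. Dm z)"
  have Qeq: "Qpc (\<psi> h) h x = (LINT z|lborel. J h (latt h (fl h x)) z)" if h: "0 < h" "h < 1" for h x
  proof -
    have "Qpc (\<psi> h) h x = \<psi> h (fl h x)" by (rule Qpc_eq[OF h(1)])
    also have "\<dots> = (LINT z|lborel. J h (latt h (fl h x)) z)"
      by (rule psi_eq[OF h hyp[OF h]])
    finally show ?thesis .
  qed
  have \<phi>i: "integrable lborel \<phi>" and \<phi>m: "\<phi> \<in> borel_measurable borel" using Cc_integrable[OF \<phi>] by auto
  have rhs: "(LINT x|lborel. \<phi> x * frac_lap_diag \<alpha> \<Phi> x) = (LINT x|lborel. Ilim x * \<phi> x)"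
    by (simp add: frac_eq mult.commute)
  show ?thesis unfolding rhs
  proof (rule tendsto_at_right_sequentially[of 0 1])
    fix S :: "nat \<Rightarrow> real" assume S: "\<And>n. 0 < S n" "\<And>n. S n < 1" "S \<longlonglongrightarrow> 0"
    have conv: "(\<lambda>n. Qpc (\<psi> (S n)) (S n) x * \<phi> x) \<longlonglongrightarrow> Ilim x * \<phi> x" for x
    proof -
      have "(\<lambda>n. LINT z|lborel. J (S n) (latt (S n) (fl (S n) x)) z) \<longlonglongrightarrow> Ilim x"
        by (rule inner_conv[OF S round_tendsto[OF S(1) S(3)]])
      then have "(\<lambda>n. Qpc (\<psi> (S n)) (S n) x) \<longlonglongrightarrow> Ilim x"
        using Qeq[OF S(1) S(2)] by simp
      then show ?thesis by (intro tendsto_mult tendsto_const)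
    qed
    have meas: "(\<lambda>x. Qpc (\<psi> (S n)) (S n) x * \<phi> x) \<in> borel_measurable lborel" for n
    proof -
      have "Qpc (\<psi> (S n)) (S n) = (\<lambda>x. \<psi> (S n) (fl (S n) x))" using Qpc_eq[OF S(1)] by blast
      then have "Qpc (\<psi> (S n)) (S n) \<in> borel_measurable lborel" using step_measurable[OF S(1)] by simp
      then show ?thesis using \<phi>m by (intro borel_measurable_times) auto
    qed
    show "(\<lambda>n. LINT x|lborel. Qpc (\<psi> (S n)) (S n) x * \<phi> x) \<longlonglongrightarrow> (LINT x|lborel. Ilim x * \<phi> x)"
    proof (rule integral_dominated_convergence[where w = "\<lambda>x. Dint * \<bar>\<phi> x\<bar>"])
      show "(\<lambda>x. Ilim x * \<phi> x) \<in> borel_measurable lborel"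
        by (rule borel_measurable_LIMSEQ_real[OF conv meas])
      show "\<And>n. (\<lambda>x. Qpc (\<psi> (S n)) (S n) x * \<phi> x) \<in> borel_measurable lborel" by (rule meas)
      show "integrable lborel (\<lambda>x. Dint * \<bar>\<phi> x\<bar>)" using \<phi>i by (intro integrable_mult_right integrable_abs)
      show "AE x in lborel. (\<lambda>n. Qpc (\<psi> (S n)) (S n) x * \<phi> x) \<longlonglongrightarrow> Ilim x * \<phi> x"
        using conv by simp
      show "\<And>n. AE x in lborel. norm (Qpc (\<psi> (S n)) (S n) x * \<phi> x) \<le> Dint * \<bar>\<phi> x\<bar>"
      proof (intro AE_I2)
        fix n x
        have "\<bar>Qpc (\<psi> (S n)) (S n) x\<bar> \<le> Dint"
          unfolding Qeq[OF S(1) S(2)] Dint_def by (rule inner_bound[OF S(1) S(2)])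
        then show "norm (Qpc (\<psi> (S n)) (S n) x * \<phi> x) \<le> Dint * \<bar>\<phi> x\<bar>"
          by (simp add: abs_mult mult_right_mono)
      qed
    qed
  qed simp
qed

end

theorem theorem10p3:
  fixes \<alpha> :: real
    and \<Phi> :: "(real^'n) \<times> (real^'n) \<Rightarrow> real"
    and \<psi> :: "real \<Rightarrow> int^'n \<Rightarrow> real"
    and \<phi> :: "real^'n \<Rightarrow> real"
  assumes "0 < \<alpha>" and "\<alpha> < 2"
    and "\<Phi> \<in> Cc_inf"
    and "\<And>x. \<Phi> (x, x) = 0"
    and "\<And>h \<phi>'. 0 < h \<Longrightarrow> h < 1 \<Longrightarrow> \<phi>' \<in> Cc \<Longrightarrow>
           (\<Sum>\<^sub>\<infinity>k. h ^ CARD('n) * (\<phi>' (latt h k) * \<psi> h k))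
         = (\<Sum>\<^sub>\<infinity>(k, j)\<in>{(k, j). k \<noteq> j}.
              h ^ (2 * CARD('n)) * (\<phi>' (latt h k) * \<Phi> (latt h k, latt h j))
                / norm (latt h k - latt h j) powr (real CARD('n) + \<alpha>))"
    and "\<phi> \<in> Cc"
  shows "((\<lambda>h. LINT x|lborel. Qpc (\<psi> h) h x * \<phi> x)
           \<longlongrightarrow> (LINT x|lborel. \<phi> x * frac_lap_diag \<alpha> \<Phi> x)) (at_right 0)"
proof -
  have sm: "smooth_fun \<Phi>" and cs: "compact_support \<Phi>" using assms(3) by (auto simp: Cc_inf_def)
  have "bounded (closure {p. \<Phi> p \<noteq> 0})" using cs by (simp add: compact_support_def compact_imp_bounded)
  then obtain R where R: "\<And>p. p \<in> closure {p. \<Phi> p \<noteq> 0} \<Longrightarrow> norm p \<le> R" by (auto simp: bounded_iff)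
  define R0 where "R0 = max R 1"
  have supp: "norm p \<le> R0" if "\<Phi> p \<noteq> 0" for p
  proof -
    have "p \<in> closure {p. \<Phi> p \<noteq> 0}" by (rule subsetD[OF closure_subset]) (use that in simp)
    then have "norm p \<le> R" by (rule R)
    then show ?thesis unfolding R0_def by simp
  qed
  obtain C0 where C0: "\<And>a b. \<bar>\<Phi> (a, a + b) + \<Phi> (a, a - b) - 2 * \<Phi> (a, a)\<bar> \<le> C0 * (norm b)\<^sup>2"
    using H_bound_gen[OF sm cs] by blast
  define C where "C = max C0 0"
  have Hb: "\<bar>\<Phi> (a, a + b) + \<Phi> (a, a - b)\<bar> \<le> C * (norm b)\<^sup>2" for a b
  proof -
    have "C0 * (norm b)\<^sup>2 \<le> C * (norm b)\<^sup>2" unfolding C_def by (intro mult_right_mono) auto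
    then show ?thesis using C0[of a b] assms(4)[of a] by simp
  qed
  interpret fsetting \<alpha> \<Phi> R0 C
  proof
    show "0 < \<alpha>" "\<alpha> < 2" by (fact assms(1)) (fact assms(2))
    show "continuous_on UNIV \<Phi>" by (rule smooth_cont[OF sm])
    show "1 \<le> R0" by (simp add: R0_def)
    show "\<And>p. \<Phi> p \<noteq> 0 \<Longrightarrow> norm p \<le> R0" by (rule supp)
    show "0 \<le> C" by (simp add: C_def)
    show "\<And>a b. \<bar>\<Phi> (a, a + b) + \<Phi> (a, a - b)\<bar> \<le> C * (norm b)\<^sup>2" by (rule Hb)
    show "\<And>x. \<Phi> (x, x) = 0" by (rule assms(4))
  qed
  show ?thesis by (rule main[OF assms(5) assms(6)])
qed

end
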